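(* Let $m,n\in\mathbf{N}$. If there is a set family of shape $(m^n)$ and type $\lambda$, and $\mu$ is a partition with $\mu\rhd\lambda$ (strictly in the dominance order), then there are two distinct set families of shape $(m^n)$ and type $\mu$.
   Context: A set family of shape $(m^n)$ is a collection of $n$ distinct $m$-subsets of $\mathbf{N}=\{1,2,\dots\}$. If $\lambda$ is a partition with largest part $a$ and conjugate $\lambda'$, a set family has type $\lambda$ if for each $i\in\{1,\dots,a\}$ exactly $\lambda'_i$ of its sets contain $i$. *)

theory Defs
  imports Main
begin

definition is_partition :: "nat list \<Rightarrow> bool" where
  "is_partition lam \<longleftrightarrow> sorted_wrt (\<ge>) lam \<and> 0 \<notin> set lam"

definition largest_part :: "nat list \<Rightarrow> nat" where
  "largest_part lam = (if lam = [] then 0 else hd lam)"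

text \<open>Conjugate partition: the i-th part of lam' is the number of parts of lam that are at least i.\<close>
definition conj_part :: "nat list \<Rightarrow> nat \<Rightarrow> nat" where
  "conj_part lam i = length (filter (\<lambda>x. i \<le> x) lam)"

definition strictly_dominates :: "nat list \<Rightarrow> nat list \<Rightarrow> bool" where
  "strictly_dominates mu lam \<longleftrightarrow>
     sum_list mu = sum_list lam \<and>
     (\<forall>k. sum_list (take k lam) \<le> sum_list (take k mu)) \<and> mu \<noteq> lam"

text \<open>A set family of shape (m^n): n distinct m-subsets of N = {1,2,...}.\<close>
definition set_family_shape :: "nat \<Rightarrow> nat \<Rightarrow> nat set set \<Rightarrow> bool" where
  "set_family_shape m n F \<longleftrightarrow> finite F \<and> card F = n \<and>
     (\<forall>S\<in>F. finite S \<and> card S = m \<and> 0 \<notin> S)"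

definition has_type :: "nat list \<Rightarrow> nat set set \<Rightarrow> bool" where
  "has_type lam F \<longleftrightarrow>
     (\<forall>i\<in>{1..largest_part lam}. card {S\<in>F. i \<in> S} = conj_part lam i)"

end

theory Submission
  imports Defs "HOL-Library.Multiset"
begin


lemma conj_Cons: "conj_part (x#xs) i = (if i \<le> x then 1 else 0) + conj_part xs i"
  by (simp add: conj_part_def)

lemma conj_split: "conj_part xs x = count_list xs x + conj_part xs (Suc x)"
  by (induction xs) (auto simp: conj_part_def)

lemma conj_anti: "i \<le> j \<Longrightarrow> conj_part xs j \<le> conj_part xs i"
  by (induction xs) (auto simp: conj_part_def)

lemma conj_zero: "\<forall>x\<in>set xs. x < i \<Longrightarrow> conj_part xs i = 0"
  by (induction xs) (auto simp: conj_part_def)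

lemma sum_ind: "(\<Sum>i=1..k. (if i \<le> (x::nat) then 1 else 0::nat)) = min x k"
proof -
  have "(\<Sum>i=1..k. (if i \<le> x then 1 else 0::nat)) = card {i\<in>{1..k}. i \<le> x}"
    by (simp add: sum.If_cases) (intro arg_cong[where f=card], auto)
  also have "{i\<in>{1..k}. i \<le> x} = {1..min x k}" by auto
  finally show ?thesis by simp
qed

lemma sum_conj: "(\<Sum>i=1..k. conj_part xs i) = sum_list (map (\<lambda>x. min x k) xs)"
proof (induction xs)
  case Nil then show ?case by (simp add: conj_part_def)
next
  case (Cons x xs)
  have "(\<Sum>i=1..k. conj_part (x#xs) i) = (\<Sum>i=1..k. (if i \<le> x then 1 else 0::nat)) + (\<Sum>i=1..k. conj_part xs i)"
    by (simp add: conj_Cons sum.distrib)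
  then show ?case using Cons sum_ind by simp
qed

lemma L1: "sum_list ys \<le> sum_list (map (\<lambda>x. x-k) ys) + length ys * (k::nat)"
  by (induction ys) auto

lemma L2: "\<forall>x\<in>set ys. k < x \<Longrightarrow> sum_list (map (\<lambda>x. x-k) ys) + length ys * (k::nat) = sum_list ys"
  by (induction ys) auto

lemma L3: "sorted_wrt (\<ge>) xs \<Longrightarrow> y \<in> set (dropWhile (\<lambda>x. (k::nat)<x) xs) \<Longrightarrow> y \<le> k"
  by (induction xs) (auto split: if_splits)

lemma L4: "sum_list (map f (take r xs)) \<le> sum_list (map (f::_\<Rightarrow>nat) xs)"
proof -
  have "sum_list (map f xs) = sum_list (map f (take r xs)) + sum_list (map f (drop r xs))"
    by (metis append_take_drop_id map_append sum_list_append)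
  then show ?thesis by simp
qed

lemma excess:
  assumes s: "sorted_wrt (\<ge>) lam" and dom: "\<forall>j. sum_list (take j lam) \<le> sum_list (take j mu)"
  shows "sum_list (map (\<lambda>x. x-k) lam) \<le> sum_list (map (\<lambda>x. x-(k::nat)) mu)"
proof -
  define r where "r = length (takeWhile (\<lambda>x. k<x) lam)"
  have tw: "takeWhile (\<lambda>x. k<x) lam = take r lam" unfolding r_def by (rule takeWhile_eq_take)
  have "sum_list (map (\<lambda>x. x-k) lam) = sum_list (map (\<lambda>x. x-k) (takeWhile (\<lambda>x. k<x) lam))
      + sum_list (map (\<lambda>x. x-k) (dropWhile (\<lambda>x. k<x) lam))"
    by (metis map_append sum_list_append takeWhile_dropWhile_id)
  also have "sum_list (map (\<lambda>x. x-k) (dropWhile (\<lambda>x. k<x) lam)) = 0"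
    using L3[OF s] by (simp add: sum_list_eq_0_iff)
  finally have e1: "sum_list (map (\<lambda>x. x-k) lam) = sum_list (map (\<lambda>x. x-k) (take r lam))" using tw by simp
  have lr: "length (take r lam) = r" unfolding r_def using length_takeWhile_le[of "\<lambda>x. k<x" lam] by simp
  have "sum_list (map (\<lambda>x. x-k) (take r lam)) + r * k = sum_list (take r lam)"
  proof -
    have allk: "\<forall>x\<in>set (take r lam). k < x" unfolding tw[symmetric] by (auto dest: set_takeWhileD)
    show ?thesis using L2[OF allk] lr by simp
  qed
  moreover have "sum_list (take r lam) \<le> sum_list (take r mu)" using dom by blast
  moreover have "sum_list (take r mu) \<le> sum_list (map (\<lambda>x. x-k) (take r mu)) + r * k"
  proof -
    have "length (take r mu) * k \<le> r * k" by (rule mult_le_mono1) simp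
    then show ?thesis using L1[of "take r mu" k] by linarith
  qed
  moreover have "sum_list (map (\<lambda>x. x-k) (take r mu)) \<le> sum_list (map (\<lambda>x. x-k) mu)" by (rule L4)
  ultimately show ?thesis using e1 by linarith
qed

lemma min_split: "sum_list (map (\<lambda>x. min x k) xs) + sum_list (map (\<lambda>x. x-k) xs) = sum_list (xs::nat list)"
  by (induction xs) auto

lemma conj_inj:
  assumes "is_partition lam" "is_partition mu" "\<forall>i\<ge>1. conj_part lam i = conj_part mu i"
  shows "lam = mu"
proof -
  have c: "count_list lam x = count_list mu x" for x
  proof (cases "x = 0")
    case True
    then show ?thesis using assms(1,2) unfolding is_partition_def
      by (metis count_list_0_iff)
  next
    case False
    have "conj_part lam x = conj_part mu x" "conj_part lam (Suc x) = conj_part mu (Suc x)"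
      using assms(3) False by auto
    then show ?thesis using conj_split[of lam x] conj_split[of mu x] by simp
  qed
  have m: "mset (rev lam) = mset (rev mu)" by (simp add: multiset_eq_iff count_mset c)
  have s1: "sorted (rev lam)" "sorted (rev mu)" using assms(1,2) by (auto simp: is_partition_def sorted_wrt_rev)
  have "sort (rev mu) = rev lam" using properties_for_sort[OF m s1(1)] .
  moreover have "sort (rev mu) = rev mu" using s1(2) by (simp add: sorted_sort_id)
  ultimately show ?thesis by simp
qed


definition cnt :: "nat set set \<Rightarrow> nat \<Rightarrow> nat" where
  "cnt F i = card {S\<in>F. i\<in>S}"

definition psum :: "nat set set \<Rightarrow> nat \<Rightarrow> nat" where
  "psum F k = (\<Sum>i=1..k. cnt F i)"

lemma sw_inv: "c\<in>S \<Longrightarrow> d\<notin>S \<Longrightarrow> c\<noteq>d \<Longrightarrow> insert c (insert d (S - {c}) - {d}) = S"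
  by auto

lemma swap_two:
  assumes fin: "finite F" and cd: "cnt F d + 2 \<le> cnt F c" "c \<noteq> d"
  shows "\<exists>S1 S2. S1 \<in> F \<and> S2 \<in> F \<and> S1 \<noteq> S2 \<and> c \<in> S1 \<and> d \<notin> S1 \<and> c \<in> S2 \<and> d \<notin> S2
     \<and> insert d (S1 - {c}) \<notin> F \<and> insert d (S2 - {c}) \<notin> F"
proof -
  define sw where "sw S = insert d (S - {c})" for S :: "nat set"
  define A where "A = {S\<in>F. c\<in>S \<and> d\<notin>S}"
  define B where "B = {S\<in>F. d\<in>S \<and> c\<notin>S}"
  define C where "C = {S\<in>F. c\<in>S \<and> d\<in>S}"
  have fA: "finite A" "finite B" "finite C" using fin by (auto simp: A_def B_def C_def)
  have "{S\<in>F. c\<in>S} = A \<union> C" "A \<inter> C = {}" by (auto simp: A_def C_def)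
  then have cc: "cnt F c = card A + card C" unfolding cnt_def by (simp add: card_Un_disjoint fA)
  have "{S\<in>F. d\<in>S} = B \<union> C" "B \<inter> C = {}" by (auto simp: B_def C_def)
  then have cdd: "cnt F d = card B + card C" unfolding cnt_def by (simp add: card_Un_disjoint fA)
  define Bad where "Bad = {S\<in>A. sw S \<in> F}"
  have inj: "inj_on sw A"
  proof (rule inj_onI)
    fix S T assume "S \<in> A" "T \<in> A" "sw S = sw T"
    then have "c \<in> S" "d \<notin> S" "c \<in> T" "d \<notin> T" by (auto simp: A_def)
    then have "S = insert c (sw S - {d})" "T = insert c (sw T - {d})"
      using cd(2) unfolding sw_def by (simp_all add: insert_absorb)
    then show "S = T" using \<open>sw S = sw T\<close> by simp
  qed
  have "sw ` Bad \<subseteq> B" using cd(2) by (auto simp: Bad_def B_def sw_def A_def)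
  then have "card (sw ` Bad) \<le> card B" by (simp add: card_mono fA)
  moreover have "card (sw ` Bad) = card Bad"
    by (rule card_image, rule inj_on_subset[OF inj]) (auto simp: Bad_def)
  ultimately have "card Bad \<le> card B" by simp
  have fBad: "finite Bad" "Bad \<subseteq> A" using fA by (auto simp: Bad_def)
  have "card (A - Bad) = card A - card Bad" by (simp add: card_Diff_subset fBad)
  then have "2 \<le> card (A - Bad)" using cc cdd cd \<open>card Bad \<le> card B\<close> by linarith
  then have "\<not> card (A - Bad) \<le> Suc 0" by simp
  then obtain S1 S2 where "S1 \<in> A - Bad" "S2 \<in> A - Bad" "S1 \<noteq> S2"
  proof -
    have "finite (A - Bad)" using fA by simp
    then show ?thesis using card_le_Suc0_iff_eq[of "A - Bad"] \<open>\<not> card (A - Bad) \<le> Suc 0\<close> that by blast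
  qed
  then show ?thesis unfolding A_def Bad_def sw_def by blast
qed

lemma move:
  assumes sh: "set_family_shape m n F" and S: "S \<in> F" "c \<in> S" "d \<notin> S"
    and T: "insert d (S - {c}) \<notin> F" and cd: "c \<noteq> d" "1 \<le> d"
  defines "F' \<equiv> insert (insert d (S - {c})) (F - {S})"
  shows "set_family_shape m n F'"
    and "\<And>i. int (cnt F' i) = int (cnt F i) - (if i = c then 1 else 0) + (if i = d then 1 else 0)"
proof -
  let ?T = "insert d (S - {c})"
  have fF: "finite F" and fS: "finite S" "card S = m" "0 \<notin> S" using sh S unfolding set_family_shape_def by auto
  have "card ?T = Suc (card (S - {c}))" using fS S by (intro card_insert_disjoint) auto
  also have "\<dots> = card S" by (rule card_Suc_Diff1[OF fS(1) S(2)])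
  finally have "card ?T = card S" .
  moreover have "card F' = Suc (card (F - {S}))" 
    unfolding F'_def using fF T by (intro card_insert_disjoint) auto
  moreover have "Suc (card (F - {S})) = card F" by (rule card_Suc_Diff1[OF fF S(1)])
  ultimately show "set_family_shape m n F'" using sh fS cd unfolding set_family_shape_def F'_def by auto
  fix i
  have e: "{X\<in>F'. i\<in>X} = (if i\<in>?T then insert ?T else id) ({X\<in>F. i\<in>X} - {S})"
    unfolding F'_def by (cases "i \<in> ?T") auto
  have f2: "finite {X\<in>F. i\<in>X}" using fF by simp
  have "int (cnt F' i) = int (card ({X\<in>F. i\<in>X} - {S})) + (if i\<in>?T then 1 else 0)"
    unfolding cnt_def e using T f2 by auto
  also have "int (card ({X\<in>F. i\<in>X} - {S})) = int (cnt F i) - (if i \<in> S then 1 else 0)"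
  proof -
    have "i \<in> S \<Longrightarrow> card {X\<in>F. i\<in>X} > 0" using f2 S(1) card_gt_0_iff by blast
    then show ?thesis unfolding cnt_def using f2 S by (auto simp: card_Diff_singleton_if of_nat_diff)
  qed
  finally show "int (cnt F' i) = int (cnt F i) - (if i = c then 1 else 0) + (if i = d then 1 else 0)"
    using S cd by auto
qed

lemma psum_move:
  assumes "\<And>i. int (cnt F' i) = int (cnt F i) - (if i = c then 1 else 0) + (if i = d then 1 else 0)"
  shows "int (psum F' k) = int (psum F k) - (if 1 \<le> c \<and> c \<le> k then 1 else 0) + (if 1 \<le> d \<and> d \<le> k then 1 else 0)"
proof -
  have "int (psum F' k) = (\<Sum>i=1..k. int (cnt F' i))" unfolding psum_def by simp
  also have "\<dots> = (\<Sum>i=1..k. int (cnt F i)) - (\<Sum>i=1..k. (if i = c then 1 else 0)) + (\<Sum>i=1..k. (if i = d then 1 else 0))"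
    unfolding assms by (simp add: sum.distrib sum_subtractf)
  finally show ?thesis unfolding psum_def by (simp add: sum.delta)
qed



lemma sum_last: "1 \<le> (c::nat) \<Longrightarrow> (\<Sum>i=1..c. f i) = (\<Sum>i=1..c-1. f i) + (f c :: nat)"
  by (cases c) auto

lemma core:
  fixes g :: "nat \<Rightarrow> nat"
  assumes anti: "\<And>i j. 1 \<le> i \<Longrightarrow> i \<le> j \<Longrightarrow> j \<le> K \<Longrightarrow> g j \<le> g i"
  shows "set_family_shape m n F \<Longrightarrow> (\<forall>k\<le>K. (\<Sum>i=1..k. g i) \<le> psum F k) \<Longrightarrow>
    psum F K = (\<Sum>i=1..K. g i) \<Longrightarrow> (\<exists>i\<in>{1..K}. cnt F i \<noteq> g i) \<Longrightarrow>
    \<exists>F1 F2. F1 \<noteq> F2 \<and> set_family_shape m n F1 \<and> set_family_shape m n F2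
       \<and> (\<forall>i\<in>{1..K}. cnt F1 i = g i) \<and> (\<forall>i\<in>{1..K}. cnt F2 i = g i)"
proof (induction "\<Sum>k=1..K. psum F k" arbitrary: F rule: less_induct)
  case less
  define G where "G k = (\<Sum>i=1..k. g i)" for k
  note sh = less.prems(1)
  have dom: "\<And>k. k \<le> K \<Longrightarrow> G k \<le> psum F k" using less.prems(2) by (simp add: G_def)
  have tot: "psum F K = G K" using less.prems(3) by (simp add: G_def)
  define c where "c = (LEAST i. i\<in>{1..K} \<and> cnt F i \<noteq> g i)"
  have c: "c\<in>{1..K}" "cnt F c \<noteq> g c"
    using LeastI_ex[OF less.prems(4)[unfolded Bex_def]] unfolding c_def by auto
  have below: "cnt F i = g i" if i: "1 \<le> i" "i < c" for i
  proof -
    have "\<not> (i\<in>{1..K} \<and> cnt F i \<noteq> g i)" using \<open>i < c\<close> unfolding c_def by (rule not_less_Least)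
    then show ?thesis using c(1) i by auto
  qed
  have eqb: "psum F (c-1) = G (c-1)" unfolding psum_def G_def
    by (rule sum.cong) (use below c in auto)
  have pc: "psum F c = psum F (c-1) + cnt F c" "G c = G (c-1) + g c"
    unfolding psum_def G_def by (rule sum_last, use c(1) in simp)+
  have "g c < cnt F c" using dom[of c] c pc eqb by simp
  then have stc: "G c < psum F c" using pc eqb by simp
  then have cK: "c < K" using tot c(1) by (cases "c = K") auto
  define d where "d = (LEAST k. c < k \<and> k \<le> K \<and> psum F k = G k)"
  have ex: "\<exists>k. c < k \<and> k \<le> K \<and> psum F k = G k" using cK tot by blast
  have d: "c < d" "d \<le> K" "psum F d = G d" using LeastI_ex[OF ex] unfolding d_def[symmetric] by auto
  have strict: "\<And>k. c \<le> k \<Longrightarrow> k < d \<Longrightarrow> G k < psum F k"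
  proof -
    fix k assume k: "c \<le> k" "k < d"
    show "G k < psum F k"
    proof (cases "k = c")
      case True then show ?thesis using stc by simp
    next
      case False
      have "\<not> (c < k \<and> k \<le> K \<and> psum F k = G k)"
        using \<open>k < d\<close> unfolding d_def by (rule not_less_Least)
      then show ?thesis using dom[of k] k d False by auto
    qed
  qed
  have pd: "psum F d = psum F (d-1) + cnt F d" "G d = G (d-1) + g d"
    unfolding psum_def G_def by (rule sum_last, use d c(1) in simp)+
  have "G (d-1) < psum F (d-1)" using strict[of "d-1"] d by simp
  then have "cnt F d < g d" using pd d by simp
  moreover have "g d \<le> g c" using anti[of c d] c d by simp
  ultimately have gap: "cnt F d + 2 \<le> cnt F c" using \<open>g c < cnt F c\<close> by simp
  have fF: "finite F" using sh unfolding set_family_shape_def by simp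
  have cd: "c \<noteq> d" "1 \<le> d" using c d by auto
  obtain S1 S2 where S: "S1 \<in> F" "S2 \<in> F" "S1 \<noteq> S2" "c \<in> S1" "d \<notin> S1" "c \<in> S2" "d \<notin> S2"
     "insert d (S1 - {c}) \<notin> F" "insert d (S2 - {c}) \<notin> F"
    using swap_two[OF fF gap cd(1)] by blast
  define F1 where "F1 = insert (insert d (S1 - {c})) (F - {S1})"
  define F2 where "F2 = insert (insert d (S2 - {c})) (F - {S2})"
  have sh1: "set_family_shape m n F1" and c1: "\<And>i. int (cnt F1 i) = int (cnt F i) - (if i = c then 1 else 0) + (if i = d then 1 else 0)"
    using move[OF sh S(1) S(4) S(5) S(8) cd] unfolding F1_def by auto
  have sh2: "set_family_shape m n F2" and c2: "\<And>i. int (cnt F2 i) = int (cnt F i) - (if i = c then 1 else 0) + (if i = d then 1 else 0)"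
    using move[OF sh S(2) S(6) S(7) S(9) cd] unfolding F2_def by auto
  have F12: "F1 \<noteq> F2"
  proof
    assume "F1 = F2"
    have "S1 \<in> F2" unfolding F2_def using S by auto
    moreover have "S1 \<notin> F1" unfolding F1_def using S by auto
    ultimately show False using \<open>F1 = F2\<close> by simp
  qed
  have cnt12: "cnt F1 i = cnt F2 i" for i using c1[of i] c2[of i] by simp
  have p1: "int (psum F1 k) = int (psum F k) - (if 1 \<le> c \<and> c \<le> k then 1 else 0) + (if 1 \<le> d \<and> d \<le> k then 1 else 0)" for k
    by (rule psum_move[OF c1])
  have dom1: "\<forall>k\<le>K. (\<Sum>i=1..k. g i) \<le> psum F1 k"
  proof (intro allI impI)
    fix k assume "k \<le> K"
    show "(\<Sum>i=1..k. g i) \<le> psum F1 k"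
    proof (cases "c \<le> k \<and> k < d")
      case True then show ?thesis using strict[of k] p1[of k] c(1) unfolding G_def by auto
    next
      case False then show ?thesis using dom[of k] \<open>k \<le> K\<close> p1[of k] c(1) d unfolding G_def by auto
    qed
  qed
  have "int (psum F1 K) = int (psum F K)" using p1[of K] c(1) d by simp
  then have "psum F1 K = psum F K" by (simp only: of_nat_eq_iff)
  then have tot1: "psum F1 K = (\<Sum>i=1..K. g i)" using tot unfolding G_def by simp
  have lt: "(\<Sum>k=1..K. psum F1 k) < (\<Sum>k=1..K. psum F k)"
  proof (rule sum_strict_mono_ex1)
    show "finite {1..K}" by simp
    show "\<forall>k\<in>{1..K}. psum F1 k \<le> psum F k"
    proof
      fix k assume "k \<in> {1..K}"
      have "int (psum F1 k) \<le> int (psum F k)" using p1[of k] c(1) d(1) by auto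
      then show "psum F1 k \<le> psum F k" by (simp only: of_nat_le_iff)
    qed
    have "int (psum F1 c) < int (psum F c)" using p1[of c] c(1) d(1) by auto
    then have "psum F1 c < psum F c" by (simp only: of_nat_less_iff)
    then show "\<exists>k\<in>{1..K}. psum F1 k < psum F k" using c(1) by blast
  qed
  show ?case
  proof (cases "\<forall>i\<in>{1..K}. cnt F1 i = g i")
    case True
    then show ?thesis using F12 sh1 sh2 cnt12 by metis
  next
    case False
    then show ?thesis using less.hyps[OF lt sh1 dom1 tot1] by blast
  qed
qed



theorem proposition5p1:
  fixes m n :: nat and lam mu :: "nat list" and F :: "nat set set"
  assumes "1 \<le> m" and "1 \<le> n"
    and "is_partition lam" and "is_partition mu"
    and "set_family_shape m n F" and "has_type lam F"
    and "strictly_dominates mu lam"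
  shows "\<exists>F1 F2. F1 \<noteq> F2 \<and> set_family_shape m n F1 \<and> has_type mu F1
                \<and> set_family_shape m n F2 \<and> has_type mu F2"
proof -
  have pl: "sorted_wrt (\<ge>) lam" "0 \<notin> set lam" using assms(3) by (auto simp: is_partition_def)
  have pm: "sorted_wrt (\<ge>) mu" "0 \<notin> set mu" using assms(4) by (auto simp: is_partition_def)
  have sd: "sum_list mu = sum_list lam" "\<forall>k. sum_list (take k lam) \<le> sum_list (take k mu)" "mu \<noteq> lam"
    using assms(7) by (auto simp: strictly_dominates_def)
  have lne: "lam \<noteq> []"
  proof
    assume "lam = []"
    then have "sum_list mu = 0" using sd by simp
    then have "\<forall>x\<in>set mu. x = 0" by (simp add: sum_list_eq_0_iff)
    then have "mu = []" using pm(2) by (cases mu) auto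
    then show False using sd \<open>lam = []\<close> by simp
  qed
  have mne: "mu \<noteq> []"
  proof
    assume "mu = []"
    then have "sum_list lam = 0" using sd by simp
    then have "\<forall>x\<in>set lam. x = 0" by (simp add: sum_list_eq_0_iff)
    then have "lam = []" using pl(2) by (cases lam) auto
    then show False using lne by simp
  qed
  define A where "A = hd lam"
  define K where "K = hd mu"
  have lamA: "\<forall>x\<in>set lam. x \<le> A" using pl(1) lne unfolding A_def by (cases lam) auto
  have muK: "\<forall>x\<in>set mu. x \<le> K" using pm(1) mne unfolding K_def by (cases mu) auto
  have "sum_list (take 1 lam) \<le> sum_list (take 1 mu)" using sd(2) by blast
  then have AK: "A \<le> K" using lne mne unfolding A_def K_def by (cases lam; cases mu) auto
  have lpA: "largest_part lam = A" "largest_part mu = K" using lne mne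
    by (auto simp: largest_part_def A_def K_def)
  define h where "h x = (if x \<le> A then x else x + K)" for x
  have injh: "inj h" unfolding inj_def h_def by auto
  have injI: "inj_on (image h) X" for X
    by (auto simp: inj_on_def inj_image_eq_iff[OF injh])
  define F0 where "F0 = image h ` F"
  have shF: "finite F" "card F = n" "\<And>S. S \<in> F \<Longrightarrow> finite S \<and> card S = m \<and> 0 \<notin> S"
    using assms(5) unfolding set_family_shape_def by auto
  have sh0: "set_family_shape m n F0"
    unfolding set_family_shape_def
  proof (intro conjI ballI)
    show "finite F0" using shF unfolding F0_def by simp
    show "card F0 = n" using shF card_image[OF injI[of F]] unfolding F0_def by simp
    fix T assume "T \<in> F0"
    then obtain S where S: "S \<in> F" "T = h ` S" unfolding F0_def by auto
    show "finite T" using S shF by simp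
    show "card T = m" using S shF card_image[OF inj_on_subset[OF injh, of S]] by simp
    show "0 \<notin> T" using S shF(3)[OF S(1)] by (auto simp: h_def split: if_splits)
  qed
  have memb: "i \<in> h ` S \<longleftrightarrow> (i \<le> A \<and> i \<in> S)" if "0 \<notin> S" "1 \<le> i" "i \<le> K" for S i
  proof
    assume "i \<in> h ` S"
    then obtain x where x: "x \<in> S" "i = h x" by auto
    then have "x \<noteq> 0" using that(1) by metis
    then show "i \<le> A \<and> i \<in> S" using x that by (auto simp: h_def split: if_splits)
  next
    assume "i \<le> A \<and> i \<in> S"
    then show "i \<in> h ` S" by (metis h_def image_eqI)
  qed
  have cnt0: "cnt F0 i = conj_part lam i" if i: "i \<in> {1..K}" for i
  proof -
    have "{T\<in>F0. i\<in>T} = image h ` {S\<in>F. i \<le> A \<and> i\<in>S}"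
      unfolding F0_def using memb shF(3) i by auto
    then have "cnt F0 i = card {S\<in>F. i \<le> A \<and> i\<in>S}"
      unfolding cnt_def using card_image[OF injI] by simp
    also have "\<dots> = conj_part lam i"
    proof (cases "i \<le> A")
      case True
      then show ?thesis using assms(6) i lpA unfolding has_type_def by auto
    next
      case False
      then have "conj_part lam i = 0" using lamA by (intro conj_zero) auto
      then show ?thesis using False by simp
    qed
    finally show ?thesis .
  qed
  have ps0: "psum F0 k = sum_list (map (\<lambda>x. min x k) lam)" if "k \<le> K" for k
  proof -
    have "psum F0 k = (\<Sum>i=1..k. conj_part lam i)" unfolding psum_def
      by (rule sum.cong) (use cnt0 that in auto)
    then show ?thesis using sum_conj[of lam k] by simp
  qed
  have dom: "\<forall>k\<le>K. (\<Sum>i=1..k. conj_part mu i) \<le> psum F0 k"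
  proof (intro allI impI)
    fix k assume "k \<le> K"
    have "sum_list (map (\<lambda>x. x-k) lam) \<le> sum_list (map (\<lambda>x. x-k) mu)" by (rule excess[OF pl(1) sd(2)])
    then have "sum_list (map (\<lambda>x. min x k) mu) \<le> sum_list (map (\<lambda>x. min x k) lam)"
      using min_split[of k lam] min_split[of k mu] sd(1) by linarith
    then show "(\<Sum>i=1..k. conj_part mu i) \<le> psum F0 k" using ps0[OF \<open>k \<le> K\<close>] sum_conj[of mu k] by simp
  qed
  have tot: "psum F0 K = (\<Sum>i=1..K. conj_part mu i)"
  proof -
    have "map (\<lambda>x. min x K) lam = lam" using lamA AK by (intro map_idI) auto
    moreover have "map (\<lambda>x. min x K) mu = mu" using muK by (intro map_idI) auto
    ultimately show ?thesis using ps0[of K] sd(1) sum_conj[of mu K] by simp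
  qed
  have diff: "\<exists>i\<in>{1..K}. cnt F0 i \<noteq> conj_part mu i"
  proof (rule ccontr)
    assume "\<not> ?thesis"
    then have e: "\<forall>i\<in>{1..K}. conj_part lam i = conj_part mu i" using cnt0 by auto
    have "\<forall>i\<ge>1. conj_part lam i = conj_part mu i"
    proof (intro allI impI)
      fix i :: nat assume "1 \<le> i"
      show "conj_part lam i = conj_part mu i"
      proof (cases "i \<le> K")
        case True then show ?thesis using e \<open>1 \<le> i\<close> by auto
      next
        case False
        then have "conj_part lam i = 0" "conj_part mu i = 0"
          using lamA muK AK by (auto intro!: conj_zero)
        then show ?thesis by simp
      qed
    qed
    then have "lam = mu" using conj_inj[OF assms(3,4)] by blast
    then show False using sd(3) by simp
  qed
  have anti: "\<And>i j. 1 \<le> i \<Longrightarrow> i \<le> j \<Longrightarrow> j \<le> K \<Longrightarrow> conj_part mu j \<le> conj_part mu i"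
    by (rule conj_anti)
  obtain F1 F2 where R: "F1 \<noteq> F2" "set_family_shape m n F1" "set_family_shape m n F2"
     "\<forall>i\<in>{1..K}. cnt F1 i = conj_part mu i" "\<forall>i\<in>{1..K}. cnt F2 i = conj_part mu i"
    using core[of K "conj_part mu", OF anti sh0 dom tot diff] by blast
  have "has_type mu F1" "has_type mu F2" using R(4,5) lpA unfolding has_type_def cnt_def by auto
  then show ?thesis using R by blast
qed

end
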